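(* Let $\Pi=(\mathsf A,\mathsf B)$ be a protocol and $z\in\mathbb N$. Then (1) $C^{\mathsf A,z}_\Pi$ is a measure over the $1$-leaves of $\Pi$: $C^{\mathsf A,z}_\Pi(\ell)\in[0,1]$ for every leaf $\ell$, and $C^{\mathsf A,z}_\Pi(\ell)=0$ whenever $\chi_\Pi(\ell)=0$; and (2) $\mathbb E_{\ell\leftarrow L_\Pi}[C^{\mathsf A,z}_\Pi(\ell)]=\sum_{j=0}^{z}\alpha_j\prod_{t=0}^{j-1}(1-\beta_t)(1-\alpha_t)$, where $\alpha_j=1-\mathrm{Best}_{\mathsf B}(\Pi_{(\mathsf A,j)})$, $\beta_j=1-\mathrm{Best}_{\mathsf A}(\Pi_{(\mathsf B,j)})$, and $\mathrm{Best}_{\mathsf A}(\perp)=\mathrm{Best}_{\mathsf B}(\perp)=1$.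
   Context: Protocols are $m$-round single-bit-message protocols identified with the complete binary tree of height $m$, with control scheme, edge probabilities $e_\Pi(u,ub)$, output $\chi_\Pi:\text{leaves}\to\{0,1\}$, visit probabilities $v_\Pi(u)$, leaf distribution $L_\Pi$; $\Pi_u$ is the subprotocol under node $u$ (or $\perp$ if $v_\Pi(u)=0$); expectations over $L_\perp$ are $0$; $\mathbb E_{L_{\Pi_u}}[M]$ is the expectation of the restriction of $M$ to leaves under $u$. $\mathsf A$-dominated measure $M^{\mathsf A}_\Pi$: for a 0-round protocol with leaf $\ell$, $M^{\mathsf A}_\Pi(\ell)=\chi_\Pi(\ell)$; otherwise for a leaf with first bit $b$, with $\mu_c=\mathbb E_{L_{\Pi_c}}[M^{\mathsf A}_{\Pi_c}]$: value $0$ if $e_\Pi(\lambda,b)=0$; $M^{\mathsf A}_{\Pi_b}(\ell)$ if $e_\Pi(\lambda,b)=1$, or if $e_\Pi(\lambda,b)\in(0,1)$ and ($\mathsf A$ controls the root or $\mu_b\le\mu_{1-b}$); $\frac{\mu_{1-b}}{\mu_b}M^{\mathsf A}_{\Pi_b}(\ell)$ otherwise. The $\mathsf B$-dominated measure $M^{\mathsf B}_\Pi$ is defined identically with $\mathsf A,\mathsf B$ exchanged and with base case $M^{\mathsf B}_\Pi(\ell)=1-\chi_\Pi(\ell)$. $M^{\mathsf A}_\perp,M^{\mathsf B}_\perp$ are the zero measure. Conditional protocol: for $\mathbb E_{L_\Pi}[M]<1$, $\Pi|_M$ has the same control and output and $e_{\Pi|_M}(u,ub)=0$ if $\mathbb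 E_{L_{\Pi_u}}[M]=1$, else $e_\Pi(u,ub)\frac{1-\mathbb E_{L_{\Pi_{ub}}}[M]}{1-\mathbb E_{L_{\Pi_u}}[M]}$; if $\mathbb E_{L_\Pi}[M]=1$ or $\Pi=\perp$, $\Pi|_M=\perp$. Sequence: $\Pi_{(\mathsf A,0)}=\Pi$, $\Pi_{(\mathsf B,j)}=\Pi_{(\mathsf A,j)}|_{M^{\mathsf A}_{\Pi_{(\mathsf A,j)}}}$, $\Pi_{(\mathsf A,j+1)}=\Pi_{(\mathsf B,j)}|_{M^{\mathsf B}_{\Pi_{(\mathsf B,j)}}}$. $C^{\mathsf A,z}_\Pi=\sum_{j=0}^z M^{\mathsf A}_{\Pi_{(\mathsf A,j)}}\prod_{t=0}^{j-1}(1-M^{\mathsf A}_{\Pi_{(\mathsf A,t)}})$ (pointwise on leaves). Valid attackers: deterministic strategies that never reach nodes unreachable in the honest protocol; $\mathrm{Best}_{\mathsf A}(\Pi')$ is the max over valid $\mathsf A'$ of the expected output of $(\mathsf A',\mathsf B)$, and $\mathrm{Best}_{\mathsf B}(\Pi')$ is the max over valid $\mathsf B'$ of $1$ minus the expected output of $(\mathsf A,\mathsf B')$. *)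

theory Defs
  imports Complex_Main
begin

text \<open>An m-round single-bit-message protocol, identified with the complete binary
tree of height m. Nodes are bit strings (bool lists) of length at most m,
the root is the empty list and the children of u are u @ [b].
ctrlA u: True iff party A controls node u (False: B controls it).
edge u b: the edge probability e(u, u b).
out l: the output chi(l) of leaf l (True = 1, False = 0).\<close>

record proto =
  rounds :: nat
  ctrlA  :: "bool list \<Rightarrow> bool"
  edge   :: "bool list \<Rightarrow> bool \<Rightarrow> real"
  out    :: "bool list \<Rightarrow> bool"

definition valid_proto :: "proto \<Rightarrow> bool" where
  "valid_proto P \<longleftrightarrow>
     (\<forall>u. length u < rounds P \<longrightarrow>
        (\<forall>b. 0 \<le> edge P u b) \<and> edge P u False + edge P u True = 1)"

definition leaves :: "proto \<Rightarrow> bool list set" where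
  "leaves P = {l. length l = rounds P}"

definition vis :: "proto \<Rightarrow> bool list \<Rightarrow> real" where
  "vis P u = (\<Prod>i<length u. edge P (take i u) (u ! i))"

text \<open>Expectation of a measure over the leaf distribution; None plays the role of bottom.\<close>
definition expect :: "proto option \<Rightarrow> (bool list \<Rightarrow> real) \<Rightarrow> real" where
  "expect Q M = (case Q of None \<Rightarrow> 0
                 | Some P \<Rightarrow> (\<Sum>l\<in>leaves P. vis P l * M l))"

definition sub :: "proto \<Rightarrow> bool list \<Rightarrow> proto option" where
  "sub P u = (if vis P u = 0 then None else
      Some \<lparr> rounds = rounds P - length u,
             ctrlA = (\<lambda>w. ctrlA P (u @ w)),
             edge = (\<lambda>w b. edge P (u @ w) b),
             out = (\<lambda>w. out P (u @ w)) \<rparr>)"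

definition expect_under :: "proto \<Rightarrow> bool list \<Rightarrow> (bool list \<Rightarrow> real) \<Rightarrow> real" where
  "expect_under P u M = expect (sub P u) (\<lambda>w. M (u @ w))"

text \<open>Dominated measures. Party p: True = A, False = B.
  domM_aux p n P is the p-dominated measure of an n-round protocol P.\<close>
primrec domM_aux :: "bool \<Rightarrow> nat \<Rightarrow> proto \<Rightarrow> bool list \<Rightarrow> real" where
  "domM_aux p 0 P l = (if out P l = p then 1 else 0)"
| "domM_aux p (Suc n) P l =
     (let b = hd l;
          Mb = (case sub P [b] of None \<Rightarrow> (\<lambda>_. 0) | Some Q \<Rightarrow> domM_aux p n Q);
          Mo = (case sub P [\<not> b] of None \<Rightarrow> (\<lambda>_. 0) | Some Q \<Rightarrow> domM_aux p n Q);
          \<mu>b = expect (sub P [b]) Mb;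
          \<mu>o = expect (sub P [\<not> b]) Mo;
          e = edge P [] b
      in if e = 0 then 0
         else if e = 1 \<or> ctrlA P [] = p \<or> \<mu>b \<le> \<mu>o then Mb (tl l)
         else \<mu>o / \<mu>b * Mb (tl l))"

definition domM :: "bool \<Rightarrow> proto option \<Rightarrow> bool list \<Rightarrow> real" where
  "domM p Q = (case Q of None \<Rightarrow> (\<lambda>_. 0) | Some P \<Rightarrow> domM_aux p (rounds P) P)"

definition cond :: "proto option \<Rightarrow> (bool list \<Rightarrow> real) \<Rightarrow> proto option" where
  "cond Q M = (case Q of None \<Rightarrow> None
     | Some P \<Rightarrow>
        (if expect (Some P) M \<ge> 1 then None
         else Some (P\<lparr> edge := (\<lambda>u b.
                 if expect_under P u M = 1 then 0
                 else edge P u b * (1 - expect_under P (u @ [b]) M)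
                        / (1 - expect_under P u M)) \<rparr>)))"

primrec seqA :: "proto \<Rightarrow> nat \<Rightarrow> proto option" where
  "seqA P 0 = Some P"
| "seqA P (Suc j) =
     (let Q = cond (seqA P j) (domM True (seqA P j)) in cond Q (domM False Q))"

definition seqB :: "proto \<Rightarrow> nat \<Rightarrow> proto option" where
  "seqB P j = cond (seqA P j) (domM True (seqA P j))"

definition CA :: "proto \<Rightarrow> nat \<Rightarrow> bool list \<Rightarrow> real" where
  "CA P z l = (\<Sum>j\<le>z. domM True (seqA P j) l *
                        (\<Prod>t<j. 1 - domM True (seqA P t) l))"

text \<open>Attacks: party p replaced by the deterministic strategy sigma (choosing the bit
sigma u at every node u it controls); the other party stays honest.\<close>
definition attack :: "proto \<Rightarrow> bool \<Rightarrow> (bool list \<Rightarrow> bool) \<Rightarrow> proto" where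
  "attack P p \<sigma> = P\<lparr> edge := (\<lambda>u b. if ctrlA P u = p
                                    then (if \<sigma> u = b then 1 else 0)
                                    else edge P u b) \<rparr>"

definition valid_attack :: "proto \<Rightarrow> bool \<Rightarrow> (bool list \<Rightarrow> bool) \<Rightarrow> bool" where
  "valid_attack P p \<sigma> \<longleftrightarrow>
     (\<forall>u. length u \<le> rounds P \<longrightarrow> vis (attack P p \<sigma>) u > 0 \<longrightarrow> vis P u > 0)"

definition out_exp :: "proto \<Rightarrow> real" where
  "out_exp P = (\<Sum>l\<in>leaves P. vis P l * (if out P l then 1 else 0))"

definition BestA :: "proto option \<Rightarrow> real" where
  "BestA Q = (case Q of None \<Rightarrow> 1
     | Some P \<Rightarrow> Sup {out_exp (attack P True \<sigma>) | \<sigma>. valid_attack P True \<sigma>})"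

definition BestB :: "proto option \<Rightarrow> real" where
  "BestB Q = (case Q of None \<Rightarrow> 1
     | Some P \<Rightarrow> Sup {1 - out_exp (attack P False \<sigma>) | \<sigma>. valid_attack P False \<sigma>})"

definition alpha :: "proto \<Rightarrow> nat \<Rightarrow> real" where
  "alpha P j = 1 - BestB (seqA P j)"

definition beta :: "proto \<Rightarrow> nat \<Rightarrow> real" where
  "beta P j = 1 - BestA (seqB P j)"

end

theory Submission
  imports Defs
begin


definition shift :: "proto \<Rightarrow> bool list \<Rightarrow> proto" where
  "shift P u = \<lparr> rounds = rounds P - length u,
             ctrlA = (\<lambda>w. ctrlA P (u @ w)),
             edge = (\<lambda>w b. edge P (u @ w) b),
             out = (\<lambda>w. out P (u @ w)) \<rparr>"

lemma sub_eq: "sub P u = (if vis P u = 0 then None else Some (shift P u))"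
  by (simp add: sub_def shift_def)

lemma shift_simps[simp]:
  "rounds (shift P u) = rounds P - length u"
  "ctrlA (shift P u) w = ctrlA P (u @ w)"
  "edge (shift P u) w b = edge P (u @ w) b"
  "out (shift P u) w = out P (u @ w)"
  by (simp_all add: shift_def)

lemma shift_Nil[simp]: "shift P [] = P"
  by (cases P) (simp add: shift_def)

lemma shift_shift[simp]: "shift (shift P u) v = shift P (u @ v)"
  by (simp add: shift_def diff_diff_left)

lemma vis_Nil[simp]: "vis P [] = 1"
  by (simp add: vis_def)

lemma vis_snoc: "vis P (u @ [b]) = vis P u * edge P u b"
proof -
  have "vis P (u @ [b]) = (\<Prod>i<Suc (length u). edge P (take i (u @ [b])) ((u @ [b]) ! i))"
    by (simp add: vis_def)
  also have "\<dots> = (\<Prod>i<length u. edge P (take i (u @ [b])) ((u @ [b]) ! i)) * edge P u b"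
    by (simp add: prod.lessThan_Suc)
  also have "(\<Prod>i<length u. edge P (take i (u @ [b])) ((u @ [b]) ! i)) = vis P u"
    unfolding vis_def by (rule prod.cong) (auto simp: nth_append)
  finally show ?thesis .
qed

lemma vis_append: "vis P (u @ v) = vis P u * vis (shift P u) v"
proof (induction v rule: rev_induct)
  case Nil then show ?case by simp
next
  case (snoc x xs)
  have "vis P (u @ xs @ [x]) = vis P (u @ xs) * edge P (u @ xs) x"
    using vis_snoc[of P "u @ xs" x] by simp
  also have "\<dots> = vis P u * vis (shift P u) (xs @ [x])"
    using snoc by (simp add: vis_snoc)
  finally show ?case .
qed

lemma vis_single[simp]: "vis P [b] = edge P [] b"
  using vis_snoc[of P "[]" b] by simp

lemma vis_Cons: "vis P (b # w) = edge P [] b * vis (shift P [b]) w"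
  using vis_append[of P "[b]" w] by simp

lemma vis_nonneg:
  assumes "\<And>u b. length u < rounds R \<Longrightarrow> 0 \<le> edge R u b" "length v \<le> rounds R"
  shows "0 \<le> vis R v"
  unfolding vis_def using assms by (auto intro!: prod_nonneg)

lemma finite_len[simp]: "finite {l :: bool list. length l = n}"
proof -
  have "{l :: bool list. length l = n} = {xs. set xs \<subseteq> UNIV \<and> length xs = n}" by auto
  then show ?thesis using finite_lists_length_eq[of "UNIV :: bool set" n] by simp
qed

lemma len_Suc_split: "{l :: bool list. length l = Suc n} =
   Cons True ` {w. length w = n} \<union> Cons False ` {w. length w = n}"
proof (rule set_eqI)
  fix l :: "bool list"
  show "l \<in> {l. length l = Suc n} \<longleftrightarrow> l \<in> Cons True ` {w. length w = n} \<union> Cons False ` {w. length w = n}"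
    by (cases l) auto
qed

lemma sum_len_Suc:
  "(\<Sum>l\<in>{l :: bool list. length l = Suc n}. g l) =
   (\<Sum>w\<in>{w. length w = n}. g (True # w)) + (\<Sum>w\<in>{w. length w = n}. g (False # w))"
proof -
  have "(\<Sum>l\<in>{l :: bool list. length l = Suc n}. g l) =
      (\<Sum>l\<in>Cons True ` {w. length w = n}. g l) + (\<Sum>l\<in>Cons False ` {w. length w = n}. g l)"
    unfolding len_Suc_split by (rule sum.union_disjoint) auto
  also have "\<dots> = (\<Sum>w\<in>{w. length w = n}. g (True # w)) + (\<Sum>w\<in>{w. length w = n}. g (False # w))"
    by (simp add: sum.reindex)
  finally show ?thesis .
qed

lemma sum_len_0: "(\<Sum>l\<in>{l :: bool list. length l = 0}. g l) = g []"
proof -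
  have "{l :: bool list. length l = 0} = {[]}" by auto
  then show ?thesis by simp
qed

lemma expect_decomp:
  assumes "rounds R = Suc n"
  shows "(\<Sum>l\<in>leaves R. vis R l * g l) =
     edge R [] True * (\<Sum>w\<in>{w. length w = n}. vis (shift R [True]) w * g (True # w)) +
     edge R [] False * (\<Sum>w\<in>{w. length w = n}. vis (shift R [False]) w * g (False # w))"
  unfolding leaves_def assms sum_len_Suc by (simp add: vis_Cons sum_distrib_left mult.assoc)

definition wgood :: "proto \<Rightarrow> bool" where
  "wgood R \<longleftrightarrow> (\<forall>u b. length u < rounds R \<longrightarrow> 0 \<le> edge R u b) \<and>
     (\<forall>u. length u < rounds R \<longrightarrow> edge R u False + edge R u True \<le> 1)"

definition good :: "proto \<Rightarrow> bool" where
  "good R \<longleftrightarrow> wgood R \<and>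
     (\<forall>u. length u < rounds R \<longrightarrow> vis R u > 0 \<longrightarrow> edge R u False + edge R u True = 1)"

lemma wgood_nonneg: "wgood R \<Longrightarrow> length u < rounds R \<Longrightarrow> 0 \<le> edge R u b"
  by (simp add: wgood_def)

lemma wgood_le1: "wgood R \<Longrightarrow> length u < rounds R \<Longrightarrow> edge R u False + edge R u True \<le> 1"
  by (simp add: wgood_def)

lemma good_eq1: "good R \<Longrightarrow> length u < rounds R \<Longrightarrow> vis R u > 0 \<Longrightarrow> edge R u False + edge R u True = 1"
  by (simp add: good_def)

lemma good_wgood: "good R \<Longrightarrow> wgood R"
  by (simp add: good_def)

lemma wgood_vis_nonneg: "wgood R \<Longrightarrow> length v \<le> rounds R \<Longrightarrow> 0 \<le> vis R v"
  by (rule vis_nonneg) (auto simp: wgood_def)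

lemma wgood_shift: "wgood R \<Longrightarrow> wgood (shift R u)"
  unfolding wgood_def by auto

lemma good_shift: assumes "good R" "vis R u > 0" shows "good (shift R u)"
proof -
  have "wgood (shift R u)" using assms good_wgood wgood_shift by blast
  moreover have "edge (shift R u) w False + edge (shift R u) w True = 1"
    if "length w < rounds (shift R u)" "vis (shift R u) w > 0" for w
  proof -
    have "vis R (u @ w) > 0" using assms(2) that(2) by (simp add: vis_append)
    moreover have "length (u @ w) < rounds R" using that(1) by simp
    ultimately show ?thesis using good_eq1[OF assms(1)] by simp
  qed
  ultimately show ?thesis unfolding good_def by blast
qed



lemma vis_sum_le_aux: "wgood R \<Longrightarrow> rounds R = n \<Longrightarrow> (\<Sum>l\<in>leaves R. vis R l) \<le> 1"
proof (induction n arbitrary: R)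
  case 0
  then show ?case by (simp add: leaves_def sum_len_0)
next
  case (Suc n)
  let ?S = "\<lambda>b. (\<Sum>w\<in>{w. length w = n}. vis (shift R [b]) w)"
  have S: "?S b \<le> 1" for b
    using Suc.IH[of "shift R [b]"] Suc.prems wgood_shift[OF Suc.prems(1)]
    by (simp add: leaves_def)
  have e: "0 \<le> edge R [] b" for b using wgood_nonneg[OF Suc.prems(1)] Suc.prems(2) by simp
  have "(\<Sum>l\<in>leaves R. vis R l) = edge R [] True * ?S True + edge R [] False * ?S False"
    using expect_decomp[OF Suc.prems(2), of "\<lambda>_. 1"] by simp
  also have "\<dots> \<le> edge R [] True * 1 + edge R [] False * 1"
    by (intro add_mono mult_left_mono S e)
  also have "\<dots> \<le> 1" using wgood_le1[OF Suc.prems(1), of "[]"] Suc.prems(2) by simp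
  finally show ?case .
qed

lemma vis_sum_le: "wgood R \<Longrightarrow> (\<Sum>l\<in>leaves R. vis R l) \<le> 1"
  using vis_sum_le_aux by blast

lemma vis_sum_eq_aux: "good R \<Longrightarrow> rounds R = n \<Longrightarrow> (\<Sum>l\<in>leaves R. vis R l) = 1"
proof (induction n arbitrary: R)
  case 0
  then show ?case by (simp add: leaves_def sum_len_0)
next
  case (Suc n)
  let ?S = "\<lambda>b. (\<Sum>w\<in>{w. length w = n}. vis (shift R [b]) w)"
  have S: "edge R [] b * ?S b = edge R [] b" for b
  proof (cases "edge R [] b = 0")
    case False
    have "0 \<le> edge R [] b" using wgood_nonneg[OF good_wgood[OF Suc.prems(1)]] Suc.prems(2) by simp
    then have "vis R [b] > 0" using False by simp
    then have "good (shift R [b])" using good_shift Suc.prems(1) by blast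
    then show ?thesis using Suc.IH[of "shift R [b]"] Suc.prems(2) by (simp add: leaves_def)
  qed simp
  have "(\<Sum>l\<in>leaves R. vis R l) = edge R [] True * ?S True + edge R [] False * ?S False"
    using expect_decomp[OF Suc.prems(2), of "\<lambda>_. 1"] by simp
  also have "\<dots> = edge R [] True + edge R [] False" by (simp only: S)
  also have "\<dots> = 1" using good_eq1[OF Suc.prems(1), of "[]"] Suc.prems(2) by simp
  finally show ?case .
qed

lemma vis_sum_eq: "good R \<Longrightarrow> (\<Sum>l\<in>leaves R. vis R l) = 1"
  using vis_sum_eq_aux by blast

lemma expect_bounds:
  assumes "wgood R" "\<And>l. l \<in> leaves R \<Longrightarrow> 0 \<le> M l \<and> M l \<le> 1"
  shows "0 \<le> expect (Some R) M \<and> expect (Some R) M \<le> 1"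
proof -
  have v: "0 \<le> vis R l" if "l \<in> leaves R" for l
    using wgood_vis_nonneg[OF assms(1)] that by (simp add: leaves_def)
  have "0 \<le> (\<Sum>l\<in>leaves R. vis R l * M l)"
    using v assms(2) by (intro sum_nonneg) simp
  moreover have "(\<Sum>l\<in>leaves R. vis R l * M l) \<le> (\<Sum>l\<in>leaves R. vis R l)"
    using v assms(2) by (intro sum_mono) (simp add: mult_left_le)
  ultimately show ?thesis using vis_sum_le[OF assms(1)] by (simp add: expect_def)
qed

lemma expect_under_bounds:
  assumes "wgood P" "length u \<le> rounds P" "\<And>l. l \<in> leaves P \<Longrightarrow> 0 \<le> M l \<and> M l \<le> 1"
  shows "0 \<le> expect_under P u M \<and> expect_under P u M \<le> 1"
proof (cases "vis P u = 0")
  case True then show ?thesis by (simp add: expect_under_def sub_eq expect_def)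
next
  case False
  have "0 \<le> expect (Some (shift P u)) (\<lambda>w. M (u @ w)) \<and> expect (Some (shift P u)) (\<lambda>w. M (u @ w)) \<le> 1"
    using assms by (intro expect_bounds wgood_shift) (auto simp: leaves_def)
  then show ?thesis using False by (simp add: expect_under_def sub_eq)
qed



definition condp :: "proto \<Rightarrow> (bool list \<Rightarrow> real) \<Rightarrow> proto" where
  "condp P M = P\<lparr> edge := (\<lambda>u b.
                 if expect_under P u M = 1 then 0
                 else edge P u b * (1 - expect_under P (u @ [b]) M)
                        / (1 - expect_under P u M)) \<rparr>"

lemma condp_simps[simp]:
  "rounds (condp P M) = rounds P" "ctrlA (condp P M) = ctrlA P" "out (condp P M) = out P"
  "edge (condp P M) u b = (if expect_under P u M = 1 then 0
                 else edge P u b * (1 - expect_under P (u @ [b]) M) / (1 - expect_under P u M))"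
  by (simp_all add: condp_def)

lemma leaves_condp[simp]: "leaves (condp P M) = leaves P"
  by (simp add: leaves_def)

lemma cond_Some: "cond (Some P) M = (if 1 \<le> expect (Some P) M then None else Some (condp P M))"
  by (simp add: cond_def condp_def)

lemma expect_under_Nil: "expect_under P [] M = expect (Some P) M"
  by (simp add: expect_under_def sub_eq)

lemma expect_under_vis0: "vis P u = 0 \<Longrightarrow> expect_under P u M = 0"
  by (simp add: expect_under_def sub_eq expect_def)

lemma expect_under_leaf:
  assumes "length l = rounds P"
  shows "vis P l * expect_under P l M = vis P l * M l"
proof (cases "vis P l = 0")
  case False
  have "leaves (shift P l) = {[]}" using assms by (auto simp: leaves_def)
  then show ?thesis using False by (simp add: expect_under_def sub_eq expect_def)
qed simp

lemma expect_under_step: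
  assumes "length u < rounds P" "vis P u \<noteq> 0"
  shows "expect_under P u M = edge P u True * expect_under P (u @ [True]) M
                            + edge P u False * expect_under P (u @ [False]) M"
proof -
  define k where "k = rounds P - length u - 1"
  have rk: "rounds (shift P u) = Suc k" using assms(1) by (simp add: k_def)
  have ins: "edge P u b * (\<Sum>w\<in>{w. length w = k}. vis (shift (shift P u) [b]) w * M (u @ b # w))
      = edge P u b * expect_under P (u @ [b]) M" for b
  proof (cases "edge P u b = 0")
    case False
    then have "vis P (u @ [b]) \<noteq> 0" using assms(2) by (simp add: vis_snoc)
    moreover have "leaves (shift P (u @ [b])) = {w. length w = k}"
      by (auto simp: leaves_def k_def)
    ultimately show ?thesis by (simp add: expect_under_def sub_eq expect_def)
  qed simp
  have "expect_under P u M = (\<Sum>l\<in>leaves (shift P u). vis (shift P u) l * M (u @ l))"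
    using assms(2) by (simp add: expect_under_def sub_eq expect_def)
  also have "\<dots> = edge P u True * (\<Sum>w\<in>{w. length w = k}. vis (shift (shift P u) [True]) w * M (u @ True # w))
      + edge P u False * (\<Sum>w\<in>{w. length w = k}. vis (shift (shift P u) [False]) w * M (u @ False # w))"
    using expect_decomp[OF rk, of "\<lambda>l. M (u @ l)"] by simp
  also have "\<dots> = edge P u True * expect_under P (u @ [True]) M + edge P u False * expect_under P (u @ [False]) M"
    by (simp only: ins)
  finally show ?thesis .
qed

locale condctx =
  fixes P :: proto and M :: "bool list \<Rightarrow> real"
  assumes wg: "wgood P"
    and Mb: "\<And>l. l \<in> leaves P \<Longrightarrow> 0 \<le> M l \<and> M l \<le> 1"
    and Elt: "expect (Some P) M < 1"
begin

abbreviation EU where "EU u \<equiv> expect_under P u M"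

lemma EU_bounds: assumes "length u \<le> rounds P" shows "0 \<le> EU u \<and> EU u \<le> 1"
  by (rule expect_under_bounds[OF wg assms Mb])

lemma EU_one_zero:
  assumes "length u < rounds P" "EU u = 1"
  shows "vis P u * edge P u b * (1 - EU (u @ [b])) = 0"
proof (cases "vis P u = 0")
  case False
  have st: "EU u = edge P u True * EU (u @ [True]) + edge P u False * EU (u @ [False])"
    using expect_under_step[OF assms(1) False] .
  have eT: "0 \<le> edge P u True" "0 \<le> edge P u False" using wgood_nonneg[OF wg assms(1)] by auto
  have s: "edge P u False + edge P u True \<le> 1" using wgood_le1[OF wg assms(1)] .
  have bT: "EU (u @ [True]) \<le> 1" "EU (u @ [False]) \<le> 1" using EU_bounds assms(1) by auto
  have a: "0 \<le> edge P u True * (1 - EU (u @ [True]))" using eT bT by simp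
  have c: "0 \<le> edge P u False * (1 - EU (u @ [False]))" using eT bT by simp
  have "edge P u True * (1 - EU (u @ [True])) + edge P u False * (1 - EU (u @ [False]))
      = edge P u True + edge P u False - EU u" using st by (simp add: algebra_simps)
  then have "edge P u True * (1 - EU (u @ [True])) = 0 \<and> edge P u False * (1 - EU (u @ [False])) = 0"
    using a c s assms(2) by linarith
  then show ?thesis by (cases b) auto
qed simp

lemma vis_condp:
  "length u \<le> rounds P \<Longrightarrow> vis (condp P M) u = vis P u * (1 - EU u) / (1 - expect (Some P) M)"
proof (induction u rule: rev_induct)
  case Nil
  then show ?case using Elt by (simp add: expect_under_Nil)
next
  case (snoc b u)
  have lu: "length u < rounds P" using snoc.prems by simp
  have IH: "vis (condp P M) u = vis P u * (1 - EU u) / (1 - expect (Some P) M)"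
    using snoc.IH lu by simp
  have ne: "1 - expect (Some P) M \<noteq> 0" using Elt by simp
  show ?case
  proof (cases "EU u = 1")
    case True
    have "vis P u * edge P u b * (1 - EU (u @ [b])) = 0" using EU_one_zero[OF lu True] .
    then show ?thesis using True by (simp add: vis_snoc)
  next
    case False
    then have ne2: "1 - EU u \<noteq> 0" by simp
    have key: "\<And>x d k e y. d \<noteq> 0 \<Longrightarrow> (x::real) * d / k * (e * y / d) = x * e * y / k"
      by (simp add: field_simps)
    have "vis (condp P M) (u @ [b]) = vis (condp P M) u * (edge P u b * (1 - EU (u @ [b])) / (1 - EU u))"
      using False by (simp add: vis_snoc)
    also have "\<dots> = vis P u * edge P u b * (1 - EU (u @ [b])) / (1 - expect (Some P) M)"
      unfolding IH by (rule key[OF ne2])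
    finally show ?thesis by (simp add: vis_snoc)
  qed
qed

lemma vis_condp_leaf:
  assumes "l \<in> leaves P"
  shows "vis (condp P M) l * (1 - expect (Some P) M) = vis P l * (1 - M l)"
proof -
  have "vis (condp P M) l * (1 - expect (Some P) M) = vis P l * (1 - EU l)"
    using vis_condp[of l] assms Elt by (simp add: leaves_def)
  also have "\<dots> = vis P l * (1 - M l)"
  proof -
    have h: "vis P l * EU l = vis P l * M l" using expect_under_leaf[of l P M] assms by (simp add: leaves_def)
    show ?thesis by (simp add: right_diff_distrib h)
  qed
  finally show ?thesis .
qed

lemma expect_condp:
  "expect (Some (condp P M)) f * (1 - expect (Some P) M) = expect (Some P) (\<lambda>l. (1 - M l) * f l)"
proof -
  have "expect (Some (condp P M)) f * (1 - expect (Some P) M)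
      = (\<Sum>l\<in>leaves P. vis (condp P M) l * f l * (1 - expect (Some P) M))"
    by (simp add: expect_def sum_distrib_right)
  also have "\<dots> = (\<Sum>l\<in>leaves P. (vis (condp P M) l * (1 - expect (Some P) M)) * f l)"
    by (simp add: ac_simps)
  also have "\<dots> = (\<Sum>l\<in>leaves P. vis P l * ((1 - M l) * f l))"
    by (rule sum.cong) (simp_all add: vis_condp_leaf)
  finally show ?thesis by (simp add: expect_def)
qed

lemma condp_sum:
  assumes "length u < rounds P" "EU u \<noteq> 1" "vis P u \<noteq> 0"
  shows "edge (condp P M) u False + edge (condp P M) u True
       = (edge P u False + edge P u True - EU u) / (1 - EU u)"
proof -
  have st: "EU u = edge P u True * EU (u @ [True]) + edge P u False * EU (u @ [False])"
    using expect_under_step[OF assms(1) assms(3)] .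
  have "edge (condp P M) u False + edge (condp P M) u True
      = (edge P u False * (1 - EU (u @ [False])) + edge P u True * (1 - EU (u @ [True]))) / (1 - EU u)"
    using assms(2) by (simp add: add_divide_distrib)
  also have "edge P u False * (1 - EU (u @ [False])) + edge P u True * (1 - EU (u @ [True]))
      = edge P u False + edge P u True - EU u" using st by (simp add: algebra_simps)
  finally show ?thesis .
qed

lemma wgood_condp: "wgood (condp P M)"
  unfolding wgood_def
proof (intro conjI allI impI)
  fix u :: "bool list" and b assume lu: "length u < rounds (condp P M)"
  then have lu': "length u < rounds P" by simp
  show "0 \<le> edge (condp P M) u b"
  proof (cases "EU u = 1")
    case False
    then have "EU u < 1" using EU_bounds[of u] lu' by simp
    moreover have "EU (u @ [b]) \<le> 1" using EU_bounds[of "u @ [b]"] lu' by simp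
    moreover have "0 \<le> edge P u b" using wgood_nonneg[OF wg lu'] .
    ultimately show ?thesis using False by simp
  qed simp
next
  fix u :: "bool list" assume lu: "length u < rounds (condp P M)"
  then have lu': "length u < rounds P" by simp
  have s: "edge P u False + edge P u True \<le> 1" using wgood_le1[OF wg lu'] .
  show "edge (condp P M) u False + edge (condp P M) u True \<le> 1"
  proof (cases "EU u = 1")
    case False
    then have lt: "EU u < 1" using EU_bounds[of u] lu' by simp
    show ?thesis
    proof (cases "vis P u = 0")
      case True
      have "vis P (u @ [c]) = 0" for c using True by (simp add: vis_snoc)
      then show ?thesis using True s False by (simp add: expect_under_vis0)
    next
      case nz: False
      have "(edge P u False + edge P u True - EU u) / (1 - EU u) \<le> 1"
        using s lt by (simp add: divide_le_eq_1)
      then show ?thesis using condp_sum[OF lu' False nz] by simp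
    qed
  qed simp
qed

lemma good_condp: assumes "good P" shows "good (condp P M)"
  unfolding good_def
proof (intro conjI allI impI wgood_condp)
  fix u :: "bool list" assume lu: "length u < rounds (condp P M)" and v: "0 < vis (condp P M) u"
  then have lu': "length u < rounds P" by simp
  have ne: "1 - expect (Some P) M > 0" using Elt by simp
  have v2: "vis P u * (1 - EU u) > 0" using v vis_condp[of u] lu' ne
    by (simp add: zero_less_divide_iff)
  have vn: "0 \<le> vis P u" using wgood_vis_nonneg[OF wg] lu' by simp
  have "EU u \<le> 1" using EU_bounds[of u] lu' by simp
  then have "vis P u > 0" "EU u \<noteq> 1" using v2 vn by (auto simp: zero_less_mult_iff)
  moreover have "edge P u False + edge P u True = 1" using good_eq1[OF assms lu'] calculation by simp
  ultimately show "edge (condp P M) u False + edge (condp P M) u True = 1"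
    using condp_sum[OF lu'] by simp
qed

end

lemma expect_cond:
  assumes "Q = None \<or> (\<exists>S. Q = Some S \<and> wgood S \<and> (\<forall>l\<in>leaves S. 0 \<le> M l \<and> M l \<le> 1))"
  shows "expect Q (\<lambda>l. (1 - M l) * g l) = expect (cond Q M) g * (1 - expect Q M)"
proof (cases Q)
  case None then show ?thesis by (simp add: expect_def cond_def)
next
  case (Some S)
  then have wg: "wgood S" and Mb: "\<And>l. l \<in> leaves S \<Longrightarrow> 0 \<le> M l \<and> M l \<le> 1" using assms by auto
  show ?thesis
  proof (cases "1 \<le> expect (Some S) M")
    case False
    interpret condctx S M using wg Mb False by unfold_locales auto
    show ?thesis using Some False expect_condp[of g] by (simp add: cond_Some)
  next
    case True
    have v: "0 \<le> vis S l" if "l \<in> leaves S" for l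
      using wgood_vis_nonneg[OF wg] that by (simp add: leaves_def)
    have t: "0 \<le> vis S l * (1 - M l)" if "l \<in> leaves S" for l using v[OF that] Mb[OF that] by simp
    have "(\<Sum>l\<in>leaves S. vis S l * (1 - M l)) = (\<Sum>l\<in>leaves S. vis S l) - expect (Some S) M"
      by (simp add: expect_def algebra_simps sum_subtractf)
    also have "\<dots> \<le> 0" using vis_sum_le[OF wg] True by simp
    finally have le0: "(\<Sum>l\<in>leaves S. vis S l * (1 - M l)) \<le> 0" .
    have fin: "finite (leaves S)" by (simp add: leaves_def)
    have "(\<Sum>l\<in>leaves S. vis S l * (1 - M l)) = 0"
      using le0 sum_nonneg[of "leaves S" "\<lambda>l. vis S l * (1 - M l)", OF t] by linarith
    then have z: "\<forall>l\<in>leaves S. vis S l * (1 - M l) = 0"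
      using sum_nonneg_eq_0_iff[OF fin, of "\<lambda>l. vis S l * (1 - M l)"] t by blast
    have "expect (Some S) (\<lambda>l. (1 - M l) * g l) = (\<Sum>l\<in>leaves S. (vis S l * (1 - M l)) * g l)"
      by (simp add: expect_def mult.assoc)
    also have "\<dots> = 0" using z by (intro sum.neutral) simp
    finally show ?thesis using Some True by (simp add: cond_Some expect_def)
  qed
qed



definition D :: "bool \<Rightarrow> proto option \<Rightarrow> real" where
  "D p R = expect R (domM p R)"

lemma D_None[simp]: "D p None = 0"
  by (simp add: D_def expect_def)

lemma domM_None[simp]: "domM p None = (\<lambda>_. 0)"
  by (simp add: domM_def)

lemma domM_Some: "domM p (Some S) = domM_aux p (rounds S) S"
  by (simp add: domM_def)

lemma case_sub_domM:
  assumes "rounds Q = Suc n"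
  shows "(case sub Q [c] of None \<Rightarrow> (\<lambda>_. 0) | Some R \<Rightarrow> domM_aux p n R) = domM p (sub Q [c])"
  using assms by (simp add: sub_eq domM_def)

lemma domM_aux_Suc:
  assumes "rounds Q = Suc n"
  shows "domM_aux p (Suc n) Q l =
    (if edge Q [] (hd l) = 0 then 0
     else if edge Q [] (hd l) = 1 \<or> ctrlA Q [] = p \<or> D p (sub Q [hd l]) \<le> D p (sub Q [\<not> hd l])
          then domM p (sub Q [hd l]) (tl l)
          else D p (sub Q [\<not> hd l]) / D p (sub Q [hd l]) * domM p (sub Q [hd l]) (tl l))"
  unfolding domM_aux.simps Let_def case_sub_domM[OF assms] D_def ..

declare domM_aux.simps(2)[simp del]

lemma domM_aux_range:
  "wgood S \<Longrightarrow> rounds S = n \<Longrightarrow> 0 \<le> domM_aux p n S l \<and> domM_aux p n S l \<le> 1"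
proof (induction n arbitrary: S l)
  case 0
  then show ?case by simp
next
  case (Suc n)
  have dm: "0 \<le> domM p (sub S [c]) w \<and> domM p (sub S [c]) w \<le> 1" for c w
  proof (cases "vis S [c] = 0")
    case False
    then show ?thesis using Suc.IH[of "shift S [c]"] wgood_shift[OF Suc.prems(1)] Suc.prems(2)
      by (simp add: sub_eq domM_def)
  qed (simp add: sub_eq)
  have Dm: "0 \<le> D p (sub S [c]) \<and> D p (sub S [c]) \<le> 1" for c
  proof (cases "vis S [c] = 0")
    case False
    then show ?thesis using dm[of c] wgood_shift[OF Suc.prems(1)]
      by (simp add: sub_eq D_def expect_bounds)
  qed (simp add: sub_eq)
  show ?case
  proof (cases "edge S [] (hd l) = 1 \<or> ctrlA S [] = p \<or> D p (sub S [hd l]) \<le> D p (sub S [\<not> hd l])")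
    case True
    then show ?thesis using dm by (simp add: domM_aux_Suc[OF Suc.prems(2)])
  next
    case False
    let ?r = "D p (sub S [\<not> hd l]) / D p (sub S [hd l])"
    have r: "0 \<le> ?r \<and> ?r \<le> 1" using False Dm[of "hd l"] Dm[of "\<not> hd l"] by auto
    have "0 \<le> ?r * domM p (sub S [hd l]) (tl l) \<and> ?r * domM p (sub S [hd l]) (tl l) \<le> 1"
      using r dm[of "hd l" "tl l"] by (simp del: times_divide_eq_left add: mult_le_one)
    then show ?thesis using False by (simp add: domM_aux_Suc[OF Suc.prems(2)])
  qed
qed

lemma domM_range: "wgood S \<Longrightarrow> 0 \<le> domM p (Some S) l \<and> domM p (Some S) l \<le> 1"
  using domM_aux_range by (simp add: domM_Some)

lemma D_range: "wgood S \<Longrightarrow> 0 \<le> D p (Some S) \<and> D p (Some S) \<le> 1"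
  unfolding D_def by (rule expect_bounds) (auto simp: domM_range)

lemma domM_aux_out:
  "rounds S = n \<Longrightarrow> length l = n \<Longrightarrow> out S l \<noteq> p \<Longrightarrow> domM_aux p n S l = 0"
proof (induction n arbitrary: S l)
  case 0
  then show ?case by simp
next
  case (Suc n)
  obtain b w where l: "l = b # w" using Suc.prems(2) by (cases l) auto
  have "domM p (sub S [b]) w = 0"
  proof (cases "vis S [b] = 0")
    case False
    then show ?thesis using Suc.IH[of "shift S [b]" w] Suc.prems l by (simp add: sub_eq domM_def)
  qed (simp add: sub_eq)
  then show ?case using l by (simp add: domM_aux_Suc[OF Suc.prems(1)])
qed

lemma domM_out: "l \<in> leaves S \<Longrightarrow> out S l \<noteq> p \<Longrightarrow> domM p (Some S) l = 0"
  using domM_aux_out by (simp add: domM_Some leaves_def)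

lemma D_step:
  fixes p :: bool
  assumes "rounds S = Suc n"
  defines "T \<equiv> \<lambda>b. (if edge S [] b = 0 then 0 else edge S [] b *
       (if edge S [] b = 1 \<or> ctrlA S [] = p \<or> D p (sub S [b]) \<le> D p (sub S [\<not> b])
        then D p (sub S [b]) else D p (sub S [\<not> b]) / D p (sub S [b]) * D p (sub S [b])))"
  shows "D p (Some S) = T True + T False"
proof -
  have t: "edge S [] b * (\<Sum>w\<in>{w. length w = n}. vis (shift S [b]) w * domM_aux p (Suc n) S (b # w)) = T b" for b
  proof (cases "edge S [] b = 0")
    case True then show ?thesis by (simp add: T_def)
  next
    case False
    then have sb: "sub S [b] = Some (shift S [b])" by (simp add: sub_eq)
    have lv: "leaves (shift S [b]) = {w. length w = n}" using assms(1) by (simp add: leaves_def)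
    have Db: "D p (sub S [b]) = (\<Sum>w\<in>{w. length w = n}. vis (shift S [b]) w * domM p (sub S [b]) w)"
      unfolding D_def sb by (simp add: expect_def lv)
    let ?C = "edge S [] b = 1 \<or> ctrlA S [] = p \<or> D p (sub S [b]) \<le> D p (sub S [\<not> b])"
    let ?k = "D p (sub S [\<not> b]) / D p (sub S [b])"
    have "(\<Sum>w\<in>{w. length w = n}. vis (shift S [b]) w * domM_aux p (Suc n) S (b # w))
        = (\<Sum>w\<in>{w. length w = n}. vis (shift S [b]) w * (if ?C then 1 else ?k) * domM p (sub S [b]) w)"
      using False by (intro sum.cong) (simp_all add: domM_aux_Suc[OF assms(1)])
    also have "\<dots> = (if ?C then 1 else ?k) * D p (sub S [b])"
      unfolding Db sum_distrib_left by (intro sum.cong) simp_all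
    finally show ?thesis using False by (simp add: T_def)
  qed
  have "D p (Some S) = (\<Sum>l\<in>leaves S. vis S l * domM_aux p (Suc n) S l)"
    by (simp add: D_def expect_def domM_Some assms(1))
  also have "\<dots> = T True + T False"
    unfolding expect_decomp[OF assms(1)] t ..
  finally show ?thesis .
qed



lemma attack_simps[simp]:
  "rounds (attack S a \<sigma>) = rounds S" "ctrlA (attack S a \<sigma>) = ctrlA S" "out (attack S a \<sigma>) = out S"
  "edge (attack S a \<sigma>) u b = (if ctrlA S u = a then (if \<sigma> u = b then 1 else 0) else edge S u b)"
  by (simp_all add: attack_def)

lemma leaves_attack[simp]: "leaves (attack S a \<sigma>) = leaves S"
  by (simp add: leaves_def)

lemma shift_attack: "shift (attack S a \<sigma>) u = attack (shift S u) a (\<lambda>w. \<sigma> (u @ w))"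
  by (simp add: shift_def attack_def fun_eq_iff)

lemma wgood_attack_nonneg: "wgood S \<Longrightarrow> length u < rounds S \<Longrightarrow> 0 \<le> edge (attack S a \<sigma>) u b"
  using wgood_nonneg by simp

lemma vis_attack_nonneg: "wgood S \<Longrightarrow> length v \<le> rounds S \<Longrightarrow> 0 \<le> vis (attack S a \<sigma>) v"
  by (rule vis_nonneg) (simp_all add: wgood_nonneg)

definition W :: "bool \<Rightarrow> proto \<Rightarrow> (bool list \<Rightarrow> bool) \<Rightarrow> real" where
  "W p S \<sigma> = (\<Sum>l\<in>leaves S. vis (attack S (\<not> p) \<sigma>) l * (if out S l = p then 1 else 0))"

lemma W_nonneg: "wgood S \<Longrightarrow> 0 \<le> W p S \<sigma>"
  unfolding W_def by (intro sum_nonneg mult_nonneg_nonneg vis_attack_nonneg) (auto simp: leaves_def)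

lemma W_step:
  assumes "rounds S = Suc n"
  shows "W p S \<sigma> = edge (attack S (\<not> p) \<sigma>) [] True * W p (shift S [True]) (\<lambda>w. \<sigma> (True # w))
                 + edge (attack S (\<not> p) \<sigma>) [] False * W p (shift S [False]) (\<lambda>w. \<sigma> (False # w))"
proof -
  have r: "rounds (attack S (\<not> p) \<sigma>) = Suc n" using assms by simp
  have lv: "leaves (shift S [b]) = {w. length w = n}" for b using assms by (simp add: leaves_def)
  have "W p S \<sigma> = (\<Sum>l\<in>leaves (attack S (\<not> p) \<sigma>). vis (attack S (\<not> p) \<sigma>) l * (if out S l = p then 1 else 0))"
    by (simp add: W_def)
  also have "\<dots> = edge (attack S (\<not> p) \<sigma>) [] True *
    (\<Sum>w\<in>{w. length w = n}. vis (shift (attack S (\<not> p) \<sigma>) [True]) w * (if out S (True # w) = p then 1 else 0)) +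
    edge (attack S (\<not> p) \<sigma>) [] False *
    (\<Sum>w\<in>{w. length w = n}. vis (shift (attack S (\<not> p) \<sigma>) [False]) w * (if out S (False # w) = p then 1 else 0))"
    by (rule expect_decomp[OF r])
  finally show ?thesis by (simp add: W_def lv shift_attack)
qed

lemma valid_attack_step:
  assumes "wgood S" "rounds S = Suc n"
  shows "valid_attack S a \<sigma> \<longleftrightarrow> (\<forall>b. 0 < edge (attack S a \<sigma>) [] b \<longrightarrow>
            0 < edge S [] b \<and> valid_attack (shift S [b]) a (\<lambda>w. \<sigma> (b # w)))"
proof
  assume v: "valid_attack S a \<sigma>"
  show "\<forall>b. 0 < edge (attack S a \<sigma>) [] b \<longrightarrow>
            0 < edge S [] b \<and> valid_attack (shift S [b]) a (\<lambda>w. \<sigma> (b # w))"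
  proof (intro allI impI conjI)
    fix b assume eb: "0 < edge (attack S a \<sigma>) [] b"
    have "0 < vis (attack S a \<sigma>) [b]" using eb by simp
    moreover have "length [b] \<le> rounds S" using assms(2) by simp
    ultimately have "0 < vis S [b]" using v unfolding valid_attack_def by blast
    then show pos: "0 < edge S [] b" by simp
    show "valid_attack (shift S [b]) a (\<lambda>w. \<sigma> (b # w))"
      unfolding valid_attack_def
    proof (intro allI impI)
      fix w assume lw: "length w \<le> rounds (shift S [b])" and vw: "0 < vis (attack (shift S [b]) a (\<lambda>w. \<sigma> (b # w))) w"
      have "vis (attack S a \<sigma>) (b # w) = edge (attack S a \<sigma>) [] b * vis (attack (shift S [b]) a (\<lambda>w. \<sigma> (b # w))) w"
        by (simp add: vis_Cons shift_attack)
      then have "0 < vis (attack S a \<sigma>) (b # w)" using eb vw by simp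
      moreover have "length (b # w) \<le> rounds S" using lw assms(2) by simp
      ultimately have "0 < vis S (b # w)" using v unfolding valid_attack_def by auto
      then show "0 < vis (shift S [b]) w" using pos by (simp add: vis_Cons zero_less_mult_iff)
    qed
  qed
next
  assume h: "\<forall>b. 0 < edge (attack S a \<sigma>) [] b \<longrightarrow>
            0 < edge S [] b \<and> valid_attack (shift S [b]) a (\<lambda>w. \<sigma> (b # w))"
  show "valid_attack S a \<sigma>"
    unfolding valid_attack_def
  proof (intro allI impI)
    fix u assume lu: "length u \<le> rounds S" and vu: "0 < vis (attack S a \<sigma>) u"
    show "0 < vis S u"
    proof (cases u)
      case Nil then show ?thesis by simp
    next
      case (Cons b w)
      have eq: "vis (attack S a \<sigma>) u = edge (attack S a \<sigma>) [] b * vis (attack (shift S [b]) a (\<lambda>w. \<sigma> (b # w))) w"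
        using Cons by (simp add: vis_Cons shift_attack)
      have n1: "0 \<le> edge (attack S a \<sigma>) [] b" using wgood_attack_nonneg[OF assms(1)] assms(2) by simp
      have n2: "0 \<le> vis (attack (shift S [b]) a (\<lambda>w. \<sigma> (b # w))) w"
        using vis_attack_nonneg[OF wgood_shift[OF assms(1)]] lu Cons assms(2) by simp
      have p1: "0 < edge (attack S a \<sigma>) [] b" and p2: "0 < vis (attack (shift S [b]) a (\<lambda>w. \<sigma> (b # w))) w"
        using vu n1 n2 unfolding eq by (auto simp: zero_less_mult_iff)
      then have "0 < edge S [] b" "valid_attack (shift S [b]) a (\<lambda>w. \<sigma> (b # w))" using h by auto
      moreover have "length w \<le> rounds (shift S [b])" using lu Cons assms(2) by simp
      ultimately have "0 < vis (shift S [b]) w" using p2 unfolding valid_attack_def by blast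
      then show ?thesis using Cons \<open>0 < edge S [] b\<close> by (simp add: vis_Cons)
    qed
  qed
qed

lemma W_base: "rounds S = 0 \<Longrightarrow> W p S \<sigma> = (if out S [] = p then 1 else 0)"
  by (simp add: W_def leaves_def sum_len_0)

lemma valid_base: "rounds S = 0 \<Longrightarrow> valid_attack S a \<sigma>"
  by (simp add: valid_attack_def)



lemma best_aux:
  "good S \<Longrightarrow> rounds S = n \<Longrightarrow>
    (\<forall>\<sigma>. valid_attack S (\<not> p) \<sigma> \<longrightarrow> D p (Some S) \<le> W p S \<sigma>) \<and>
    (\<exists>\<sigma>. valid_attack S (\<not> p) \<sigma> \<and> W p S \<sigma> = D p (Some S))"
proof (induction n arbitrary: S)
  case 0
  have "D p (Some S) = (if out S [] = p then 1 else 0)"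
    using 0 by (simp add: D_def expect_def domM_Some leaves_def sum_len_0)
  then show ?case using 0 by (simp add: W_base valid_base)
next
  case (Suc n)
  have wg: "wgood S" using Suc.prems(1) by (rule good_wgood)
  define e where "e = edge S [] "
  define Db where "Db = (\<lambda>b. D p (sub S [b]))"
  have en: "0 \<le> e b" for b using wgood_nonneg[OF wg] Suc.prems(2) by (simp add: e_def)
  have e1: "e False + e True = 1" using good_eq1[OF Suc.prems(1), of "[]"] Suc.prems(2) by (simp add: e_def)
  have gsh: "good (shift S [b])" if "0 < e b" for b
    using good_shift[OF Suc.prems(1)] that by (simp add: e_def)
  have subS: "sub S [b] = Some (shift S [b])" if "0 < e b" for b
    using that by (simp add: e_def sub_eq)
  have Db0: "Db b = 0" if "e b = 0" for b using that by (simp add: Db_def e_def sub_eq)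
  have Dbnn: "0 \<le> Db b" for b
  proof (cases "e b = 0")
    case False then have "0 < e b" using en[of b] by simp
    then show ?thesis using D_range[OF wgood_shift[OF wg]] subS by (simp add: Db_def)
  qed (simp add: Db0)
  have IH: "(\<forall>\<sigma>. valid_attack (shift S [b]) (\<not> p) \<sigma> \<longrightarrow> Db b \<le> W p (shift S [b]) \<sigma>) \<and>
    (\<exists>\<sigma>. valid_attack (shift S [b]) (\<not> p) \<sigma> \<and> W p (shift S [b]) \<sigma> = Db b)" if "0 < e b" for b
    using Suc.IH[OF gsh[OF that]] Suc.prems(2) subS[OF that] by (simp add: Db_def)
  have "\<forall>b. \<exists>\<sigma>. 0 < e b \<longrightarrow> valid_attack (shift S [b]) (\<not> p) \<sigma> \<and> W p (shift S [b]) \<sigma> = Db b"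
    using IH by blast
  then obtain F where F: "\<And>b. 0 < e b \<Longrightarrow> valid_attack (shift S [b]) (\<not> p) (F b) \<and> W p (shift S [b]) (F b) = Db b"
    by metis
  define mk where "mk = (\<lambda>c. (\<lambda>u. case u of [] \<Rightarrow> c | d # w \<Rightarrow> F d w))"
  have mk_sh: "(\<lambda>w. mk c (b # w)) = F b" for c b by (simp add: mk_def)
  have mk0: "mk c [] = c" for c by (simp add: mk_def)
  have Dst: "D p (Some S) = (\<Sum>b\<in>UNIV. (if e b = 0 then 0 else e b *
       (if e b = 1 \<or> ctrlA S [] = p \<or> Db b \<le> Db (\<not> b)
        then Db b else Db (\<not> b) / Db b * Db b)))"
    unfolding e_def Db_def D_step[OF Suc.prems(2), of p] UNIV_bool by (simp only: sum.insert_remove finite.intros) simp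
  have Wst: "W p S \<sigma> = (\<Sum>b\<in>UNIV. edge (attack S (\<not> p) \<sigma>) [] b * W p (shift S [b]) (\<lambda>w. \<sigma> (b # w)))" for \<sigma>
    unfolding W_step[OF Suc.prems(2), of p \<sigma>] UNIV_bool by (simp only: sum.insert_remove finite.intros) simp
  have vst: "valid_attack S (\<not> p) \<sigma> \<longleftrightarrow> (\<forall>b. 0 < edge (attack S (\<not> p) \<sigma>) [] b \<longrightarrow>
            0 < e b \<and> valid_attack (shift S [b]) (\<not> p) (\<lambda>w. \<sigma> (b # w)))" for \<sigma>
    using valid_attack_step[OF wg Suc.prems(2)] by (simp add: e_def)
  show ?case
  proof (cases "ctrlA S [] = p")
    case True
    have Deq: "D p (Some S) = (\<Sum>b\<in>UNIV. e b * Db b)"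
      unfolding Dst using True by (intro sum.cong) auto
    have att: "edge (attack S (\<not> p) \<sigma>) [] b = e b" for \<sigma> b using True by (simp add: e_def)
    show ?thesis
    proof (intro conjI allI impI exI)
      fix \<sigma> assume v: "valid_attack S (\<not> p) \<sigma>"
      have "e b * Db b \<le> e b * W p (shift S [b]) (\<lambda>w. \<sigma> (b # w))" for b
      proof (cases "e b = 0")
        case False
        then have pos: "0 < e b" using en[of b] by simp
        then have "valid_attack (shift S [b]) (\<not> p) (\<lambda>w. \<sigma> (b # w))" using v vst att by auto
        then show ?thesis using IH[OF pos] en[of b] by (simp add: mult_left_mono)
      qed simp
      then show "D p (Some S) \<le> W p S \<sigma>" unfolding Deq Wst att by (intro sum_mono) simp
    next
      show "valid_attack S (\<not> p) (mk True)" unfolding vst att mk_sh using F by blast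
      have "W p S (mk True) = (\<Sum>b\<in>UNIV. e b * Db b)"
        unfolding Wst att mk_sh
      proof (intro sum.cong refl)
        fix b :: bool show "e b * W p (shift S [b]) (F b) = e b * Db b"
          using F[of b] en[of b] by (cases "e b = 0") auto
      qed
      then show "W p S (mk True) = D p (Some S)" using Deq by simp
    qed
  next
    case False
    then have cA: "ctrlA S [] = (\<not> p)" by simp
    have att: "edge (attack S (\<not> p) \<sigma>) [] b = (if \<sigma> [] = b then 1 else 0)" for \<sigma> b using cA by simp
    have "\<exists>c. 0 < e c \<and> D p (Some S) = Db c \<and> (\<forall>d. 0 < e d \<longrightarrow> Db c \<le> Db d)"
    proof (cases "e True = 0")
      case True
      then have "e False = 1" using e1 by simp
      then show ?thesis using True Dst False by (intro exI[of _ False]) (auto simp: UNIV_bool; case_tac d; auto)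
    next
      case eT: False
      show ?thesis
      proof (cases "e False = 0")
        case True
        then have "e True = 1" using e1 by simp
        then show ?thesis using True Dst False by (intro exI[of _ True]) (auto simp: UNIV_bool; case_tac d; auto)
      next
        case eF: False
        have p1: "0 < e True" "0 < e False" using eT eF en by (auto simp: order_less_le)
        have l1: "e True \<noteq> 1" "e False \<noteq> 1" using p1 e1 by auto
        have mn: "(if Db b \<le> Db (\<not> b) then Db b else Db (\<not> b) / Db b * Db b) = min (Db True) (Db False)" for b
          using Dbnn[of b] Dbnn[of "\<not> b"] by (cases b) auto
        have tb: "(if e b = 0 then 0 else e b * (if e b = 1 \<or> ctrlA S [] = p \<or> Db b \<le> Db (\<not> b)
            then Db b else Db (\<not> b) / Db b * Db b)) = e b * min (Db True) (Db False)" for b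
        proof -
          have ne: "e b \<noteq> 0 \<and> e b \<noteq> 1" using eT eF l1 by (cases b) auto
          have "(if e b = 0 then 0 else e b * (if e b = 1 \<or> ctrlA S [] = p \<or> Db b \<le> Db (\<not> b)
            then Db b else Db (\<not> b) / Db b * Db b)) =
            e b * (if Db b \<le> Db (\<not> b) then Db b else Db (\<not> b) / Db b * Db b)"
            using ne False by simp
          also have "\<dots> = e b * min (Db True) (Db False)" by (simp only: mn)
          finally show ?thesis .
        qed
        have "D p (Some S) = (e True + e False) * min (Db True) (Db False)"
          unfolding Dst tb by (simp add: UNIV_bool algebra_simps)
        then have Dm: "D p (Some S) = min (Db True) (Db False)" using e1 by simp
        show ?thesis
        proof (cases "Db True \<le> Db False")
          case True then show ?thesis using Dm p1 by (intro exI[of _ True]) (auto simp: min_def, (case_tac d; simp))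
        next
          case False then show ?thesis using Dm p1 by (intro exI[of _ False]) (auto simp: min_def, (case_tac d; simp))
        qed
      qed
    qed
    then obtain c where c: "0 < e c" "D p (Some S) = Db c" "\<And>d. 0 < e d \<Longrightarrow> Db c \<le> Db d" by blast
    have Wsel: "W p S \<sigma> = W p (shift S [\<sigma> []]) (\<lambda>w. \<sigma> (\<sigma> [] # w))" for \<sigma>
      unfolding Wst att by (cases "\<sigma> []") (simp_all add: UNIV_bool)
    show ?thesis
    proof (intro conjI allI impI exI)
      fix \<sigma> assume v: "valid_attack S (\<not> p) \<sigma>"
      have "0 < e (\<sigma> []) \<and> valid_attack (shift S [\<sigma> []]) (\<not> p) (\<lambda>w. \<sigma> (\<sigma> [] # w))"
        using v unfolding vst att by auto
      then have "Db (\<sigma> []) \<le> W p S \<sigma>" using IH Wsel by auto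
      moreover have "Db c \<le> Db (\<sigma> [])" using c(3) \<open>0 < e (\<sigma> []) \<and> _\<close> by blast
      ultimately show "D p (Some S) \<le> W p S \<sigma>" using c(2) by simp
    next
      show "valid_attack S (\<not> p) (mk c)" unfolding vst att mk_sh mk0 using F c(1) by auto
      show "W p S (mk c) = D p (Some S)" unfolding Wsel mk0 mk_sh using F[OF c(1)] c(2) by simp
    qed
  qed
qed



lemma out_exp_W: "out_exp (attack S False \<sigma>) = W True S \<sigma>"
  by (simp add: out_exp_def W_def)

lemma good_attack:
  assumes "good S" "valid_attack S a \<sigma>"
  shows "good (attack S a \<sigma>)"
proof -
  have wg: "wgood S" using assms(1) by (rule good_wgood)
  have "wgood (attack S a \<sigma>)"
    unfolding wgood_def using wgood_nonneg[OF wg] wgood_le1[OF wg] by auto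
  moreover have "edge (attack S a \<sigma>) u False + edge (attack S a \<sigma>) u True = 1"
    if "length u < rounds (attack S a \<sigma>)" "0 < vis (attack S a \<sigma>) u" for u
  proof -
    have "0 < vis S u" using assms(2) that unfolding valid_attack_def by auto
    then show ?thesis using good_eq1[OF assms(1)] that(1) by auto
  qed
  ultimately show ?thesis unfolding good_def by blast
qed

lemma out_exp_W2:
  assumes "good S" "valid_attack S True \<sigma>"
  shows "out_exp (attack S True \<sigma>) = 1 - W False S \<sigma>"
proof -
  have s1: "(\<Sum>l\<in>leaves S. vis (attack S True \<sigma>) l) = 1"
    using vis_sum_eq[OF good_attack[OF assms]] by simp
  have "out_exp (attack S True \<sigma>) = (\<Sum>l\<in>leaves S. vis (attack S True \<sigma>) l -
           vis (attack S True \<sigma>) l * (if out S l = False then 1 else 0))"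
    unfolding out_exp_def by (intro sum.cong) auto
  also have "\<dots> = 1 - W False S \<sigma>"
    by (simp add: sum_subtractf s1 W_def)
  finally show ?thesis .
qed

lemma alpha_D: assumes "good S" shows "1 - BestB (Some S) = D True (Some S)"
proof -
  obtain \<sigma>0 where s0: "valid_attack S False \<sigma>0" "W True S \<sigma>0 = D True (Some S)"
    and lb: "\<And>\<sigma>. valid_attack S False \<sigma> \<Longrightarrow> D True (Some S) \<le> W True S \<sigma>"
    using best_aux[OF assms refl, of True] by auto
  have "Sup {1 - out_exp (attack S False \<sigma>) | \<sigma>. valid_attack S False \<sigma>} = 1 - D True (Some S)"
  proof (rule cSup_eq_maximum)
    show "1 - D True (Some S) \<in> {1 - out_exp (attack S False \<sigma>) | \<sigma>. valid_attack S False \<sigma>}"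
      using s0 by (auto simp: out_exp_W intro!: exI[of _ \<sigma>0])
    show "\<And>x. x \<in> {1 - out_exp (attack S False \<sigma>) | \<sigma>. valid_attack S False \<sigma>} \<Longrightarrow> x \<le> 1 - D True (Some S)"
      using lb by (auto simp: out_exp_W)
  qed
  then show ?thesis by (simp add: BestB_def)
qed

lemma beta_D: assumes "good S" shows "1 - BestA (Some S) = D False (Some S)"
proof -
  obtain \<sigma>0 where s0: "valid_attack S True \<sigma>0" "W False S \<sigma>0 = D False (Some S)"
    and lb: "\<And>\<sigma>. valid_attack S True \<sigma> \<Longrightarrow> D False (Some S) \<le> W False S \<sigma>"
    using best_aux[OF assms refl, of False] by auto
  have "Sup {out_exp (attack S True \<sigma>) | \<sigma>. valid_attack S True \<sigma>} = 1 - D False (Some S)"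
  proof (rule cSup_eq_maximum)
    show "1 - D False (Some S) \<in> {out_exp (attack S True \<sigma>) | \<sigma>. valid_attack S True \<sigma>}"
      using s0 out_exp_W2[OF assms s0(1)] by (auto intro!: exI[of _ \<sigma>0])
    show "\<And>x. x \<in> {out_exp (attack S True \<sigma>) | \<sigma>. valid_attack S True \<sigma>} \<Longrightarrow> x \<le> 1 - D False (Some S)"
      using lb out_exp_W2[OF assms] by fastforce
  qed
  then show ?thesis by (simp add: BestA_def)
qed

definition inv :: "proto \<Rightarrow> proto option \<Rightarrow> bool" where
  "inv P Q = (case Q of None \<Rightarrow> True | Some S \<Rightarrow> good S \<and> rounds S = rounds P \<and> out S = out P)"

lemma inv_cond: assumes "inv P Q" shows "inv P (cond Q (domM p Q))"
proof (cases Q)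
  case None then show ?thesis by (simp add: inv_def cond_def)
next
  case (Some S)
  then have g: "good S" and r: "rounds S = rounds P" "out S = out P" using assms by (auto simp: inv_def)
  show ?thesis
  proof (cases "1 \<le> expect (Some S) (domM p (Some S))")
    case True then show ?thesis using Some by (simp add: cond_Some inv_def)
  next
    case False
    interpret condctx S "domM p (Some S)"
      using False domM_range[OF good_wgood[OF g]] good_wgood[OF g] by unfold_locales auto
    show ?thesis using Some False good_condp[OF g] r by (simp add: cond_Some inv_def)
  qed
qed

lemma inv_seqA: "valid_proto P \<Longrightarrow> inv P (seqA P j)"
proof (induction j)
  case 0
  have "good P" using 0 unfolding valid_proto_def good_def wgood_def by auto
  then show ?case by (simp add: inv_def)
next
  case (Suc j)
  then show ?case by (simp add: Let_def inv_cond)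
qed

lemma inv_seqB: "valid_proto P \<Longrightarrow> inv P (seqB P j)"
  by (simp add: seqB_def inv_cond inv_seqA)

lemma alpha_eq: "valid_proto P \<Longrightarrow> alpha P j = D True (seqA P j)"
  using inv_seqA[of P j] alpha_D
  by (cases "seqA P j") (auto simp: alpha_def BestB_def inv_def)

lemma beta_eq: "valid_proto P \<Longrightarrow> beta P j = D False (seqB P j)"
  using inv_seqB[of P j] beta_D
  by (cases "seqB P j") (auto simp: beta_def BestA_def inv_def)

lemma inv_cond_hyp:
  assumes "inv P Q"
  shows "Q = None \<or> (\<exists>S. Q = Some S \<and> wgood S \<and> (\<forall>l\<in>leaves S. 0 \<le> domM p Q l \<and> domM p Q l \<le> 1))"
  using assms domM_range good_wgood by (cases Q) (auto simp: inv_def)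

lemma one_step:
  assumes "inv P Q"
  defines "R \<equiv> cond Q (domM True Q)"
  shows "expect Q (\<lambda>l. (1 - domM True Q l) * ((1 - domM False R l) * f l))
       = expect (cond R (domM False R)) f * (1 - D False R) * (1 - D True Q)"
proof -
  have iR: "inv P R" unfolding R_def by (rule inv_cond[OF assms(1)])
  have "expect Q (\<lambda>l. (1 - domM True Q l) * ((1 - domM False R l) * f l))
      = expect R (\<lambda>l. (1 - domM False R l) * f l) * (1 - expect Q (domM True Q))"
    unfolding R_def by (rule expect_cond[OF inv_cond_hyp[OF assms(1)]])
  also have "expect R (\<lambda>l. (1 - domM False R l) * f l) = expect (cond R (domM False R)) f * (1 - expect R (domM False R))"
    by (rule expect_cond[OF inv_cond_hyp[OF iR]])
  finally show ?thesis by (simp add: D_def)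
qed



lemma expect_cong: "(\<And>l. l \<in> leaves P \<Longrightarrow> f l = g l) \<Longrightarrow> expect (Some P) f = expect (Some P) g"
  by (simp add: expect_def)

lemma main_ind:
  assumes "valid_proto P"
  shows "expect (Some P) (\<lambda>l. f l * (\<Prod>t<j. (1 - domM True (seqA P t) l) * (1 - domM False (seqB P t) l)))
       = expect (seqA P j) f * (\<Prod>t<j. (1 - D False (seqB P t)) * (1 - D True (seqA P t)))"
proof (induction j arbitrary: f)
  case 0
  then show ?case by simp
next
  case (Suc j)
  define f' where "f' = (\<lambda>l. (1 - domM True (seqA P j) l) * ((1 - domM False (seqB P j) l) * f l))"
  have os: "expect (seqA P j) f' = expect (seqA P (Suc j)) f * (1 - D False (seqB P j)) * (1 - D True (seqA P j))"
    unfolding f'_def using one_step[OF inv_seqA[OF assms, of j], of f] by (simp add: seqB_def Let_def)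
  have "expect (Some P) (\<lambda>l. f l * (\<Prod>t<Suc j. (1 - domM True (seqA P t) l) * (1 - domM False (seqB P t) l)))
      = expect (Some P) (\<lambda>l. f' l * (\<Prod>t<j. (1 - domM True (seqA P t) l) * (1 - domM False (seqB P t) l)))"
    by (simp add: f'_def prod.lessThan_Suc ac_simps)
  also have "\<dots> = expect (seqA P j) f' * (\<Prod>t<j. (1 - D False (seqB P t)) * (1 - D True (seqA P t)))"
    by (rule Suc.IH)
  also have "\<dots> = expect (seqA P (Suc j)) f * (\<Prod>t<Suc j. (1 - D False (seqB P t)) * (1 - D True (seqA P t)))"
    unfolding os by (simp add: prod.lessThan_Suc ac_simps)
  finally show ?case .
qed

lemma telescope:
  "(\<Sum>j\<le>z. x j * (\<Prod>t<j. 1 - x t)) = 1 - (\<Prod>t<Suc z. 1 - (x t :: real))"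
  by (induction z) (simp_all add: prod.lessThan_Suc algebra_simps)

lemma domM_opt_range: "inv P Q \<Longrightarrow> 0 \<le> domM p Q l \<and> domM p Q l \<le> 1"
  by (cases Q) (auto simp: inv_def domM_range good_wgood)

lemma domM_opt_out: "inv P Q \<Longrightarrow> l \<in> leaves P \<Longrightarrow> out P l \<noteq> p \<Longrightarrow> domM p Q l = 0"
  by (cases Q) (auto simp: inv_def leaves_def intro!: domM_out)

theorem lemma3p24:
  fixes P :: proto and z :: nat
  assumes "valid_proto P"
  shows "(\<forall>l\<in>leaves P. 0 \<le> CA P z l \<and> CA P z l \<le> 1 \<and> (\<not> out P l \<longrightarrow> CA P z l = 0))
       \<and> expect (Some P) (CA P z)
         = (\<Sum>j\<le>z. alpha P j * (\<Prod>t<j. (1 - beta P t) * (1 - alpha P t)))"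
proof
  let ?M = "\<lambda>t. domM True (seqA P t)"
  let ?N = "\<lambda>t. domM False (seqB P t)"
  have Mr: "0 \<le> ?M t l \<and> ?M t l \<le> 1" for t l using domM_opt_range[OF inv_seqA[OF assms]] .
  show "\<forall>l\<in>leaves P. 0 \<le> CA P z l \<and> CA P z l \<le> 1 \<and> (\<not> out P l \<longrightarrow> CA P z l = 0)"
  proof
    fix l assume l: "l \<in> leaves P"
    have ca: "CA P z l = 1 - (\<Prod>t<Suc z. 1 - ?M t l)"
      unfolding CA_def by (rule telescope)
    have "0 \<le> (\<Prod>t<Suc z. 1 - ?M t l)" using Mr by (intro prod_nonneg) auto
    moreover have "(\<Prod>t<Suc z. 1 - ?M t l) \<le> 1" using Mr by (intro prod_le_1) auto
    moreover have "CA P z l = 0" if "\<not> out P l"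
      unfolding CA_def using domM_opt_out[OF inv_seqA[OF assms] l] that by simp
    ultimately show "0 \<le> CA P z l \<and> CA P z l \<le> 1 \<and> (\<not> out P l \<longrightarrow> CA P z l = 0)"
      using ca by simp
  qed
  have pw: "?M j l * (\<Prod>t<j. 1 - ?M t l) = ?M j l * (\<Prod>t<j. (1 - ?M t l) * (1 - ?N t l))"
    if l: "l \<in> leaves P" for j l
  proof (cases "out P l")
    case True
    then have "?N t l = 0" for t using domM_opt_out[OF inv_seqB[OF assms] l, of False t] by simp
    then show ?thesis by simp
  next
    case False
    then have "?M j l = 0" using domM_opt_out[OF inv_seqA[OF assms] l] by simp
    then show ?thesis by simp
  qed
  have "expect (Some P) (CA P z) = (\<Sum>j\<le>z. expect (Some P) (\<lambda>l. ?M j l * (\<Prod>t<j. 1 - ?M t l)))"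
    unfolding CA_def expect_def by (simp add: sum_distrib_left sum.swap[of _ "leaves P"])
  also have "\<dots> = (\<Sum>j\<le>z. expect (Some P) (\<lambda>l. ?M j l * (\<Prod>t<j. (1 - ?M t l) * (1 - ?N t l))))"
    using pw by (intro sum.cong refl expect_cong) simp
  also have "\<dots> = (\<Sum>j\<le>z. D True (seqA P j) * (\<Prod>t<j. (1 - D False (seqB P t)) * (1 - D True (seqA P t))))"
    using main_ind[OF assms] by (simp add: D_def)
  also have "\<dots> = (\<Sum>j\<le>z. alpha P j * (\<Prod>t<j. (1 - beta P t) * (1 - alpha P t)))"
    by (simp add: alpha_eq[OF assms] beta_eq[OF assms])
  finally show "expect (Some P) (CA P z) = (\<Sum>j\<le>z. alpha P j * (\<Prod>t<j. (1 - beta P t) * (1 - alpha P t)))" .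
qed

end
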